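(* Let $X$, $\mathcal{B}$, $\Delta$, the map $\iota:X\to\Delta$ and the Gelfand transform be as in the context (in particular $\mathcal{B}$ vanishes nowhere on $X$). For $f\in\mathcal{B}$ and $k\in\mathbb{N}\setminus\{0\}$ let $N_k(f):=\{x\in X: |f(x)|\geq 1/k\}$. Then the closure of $\iota(N_k(f))$ in $\Delta$ is compact.
   Context: $X$ is a nonempty set and $\mathcal{B}$ is a real vector space of bounded functions $X\to\mathbb{R}$ closed under pointwise multiplication, pointwise max and min, with $f\wedge1\in\mathcal{B}$ for $f\in\mathcal{B}$. Assume that for every $x\in X$ there is $f\in\mathcal{B}$ with $f(x)\neq0$. $A(\mathcal{B})$ is the supremum-norm closure of $\mathcal{B}+i\mathcal{B}$, a commutative $C^\ast$-algebra with pointwise operations and complex conjugation as involution; $\Delta$ is its spectrum (nonzero continuous multiplicative linear functionals with the Gelfand topology), locally compact Hausdorff; $\hat a(\varphi)=\varphi(a)$ is the Gelfand transform, an isometric $^\ast$-isomorphism $A(\mathcal{B})\to C_0(\Delta)$. The map $\iota:X\to\Delta$ is defined by $\iota(x)(a)=a(x)$ for $a\in A(\mathcal{B})$. *)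

theory Defs
  imports "HOL-Analysis.Analysis"
begin

text \<open>The ground set X is modelled as the (nonempty) type 'a.
  B is a set of real-valued functions on X.\<close>

definition admissible_B :: "('a \<Rightarrow> real) set \<Rightarrow> bool" where
  "admissible_B B \<longleftrightarrow>
     (\<lambda>x. 0) \<in> B \<and>
     (\<forall>f\<in>B. \<forall>g\<in>B. (\<lambda>x. f x + g x) \<in> B) \<and>
     (\<forall>f\<in>B. \<forall>c::real. (\<lambda>x. c * f x) \<in> B) \<and>
     (\<forall>f\<in>B. bounded (range f)) \<and>
     (\<forall>f\<in>B. \<forall>g\<in>B. (\<lambda>x. f x * g x) \<in> B) \<and>
     (\<forall>f\<in>B. \<forall>g\<in>B. (\<lambda>x. max (f x) (g x)) \<in> B) \<and>
     (\<forall>f\<in>B. \<forall>g\<in>B. (\<lambda>x. min (f x) (g x)) \<in> B) \<and>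
     (\<forall>f\<in>B. (\<lambda>x. min (f x) 1) \<in> B)"

definition supnorm :: "('a \<Rightarrow> complex) \<Rightarrow> real" where
  "supnorm a = (SUP x. cmod (a x))"

text \<open>A(B): the sup-norm closure of B + iB.\<close>
definition Aalg :: "('a \<Rightarrow> real) set \<Rightarrow> ('a \<Rightarrow> complex) set" where
  "Aalg B = {a. \<forall>e>0. \<exists>f\<in>B. \<exists>g\<in>B.
       supnorm (\<lambda>x. a x - (complex_of_real (f x) + \<i> * complex_of_real (g x))) < e}"

definition spectrum_Delta :: "('a \<Rightarrow> real) set \<Rightarrow> (('a \<Rightarrow> complex) \<Rightarrow> complex) set" where
  "spectrum_Delta B = {\<phi>. \<phi> \<in> extensional (Aalg B) \<and>
     (\<forall>a\<in>Aalg B. \<forall>b\<in>Aalg B. \<phi> (\<lambda>x. a x + b x) = \<phi> a + \<phi> b) \<and>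
     (\<forall>a\<in>Aalg B. \<forall>c::complex. \<phi> (\<lambda>x. c * a x) = c * \<phi> a) \<and>
     (\<forall>a\<in>Aalg B. \<forall>b\<in>Aalg B. \<phi> (\<lambda>x. a x * b x) = \<phi> a * \<phi> b) \<and>
     (\<forall>a\<in>Aalg B. \<forall>e>0. \<exists>d>0. \<forall>b\<in>Aalg B.
         supnorm (\<lambda>x. b x - a x) < d \<longrightarrow> cmod (\<phi> b - \<phi> a) < e) \<and>
     (\<exists>a\<in>Aalg B. \<phi> a \<noteq> 0)}"

text \<open>Gelfand topology: the weak-* topology (pointwise convergence on A(B)),
  i.e. the coarsest topology making all evaluations \<phi> \<mapsto> \<phi> a continuous.\<close>
definition gelfand_top :: "('a \<Rightarrow> real) set \<Rightarrow> (('a \<Rightarrow> complex) \<Rightarrow> complex) topology" where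
  "gelfand_top B = subtopology (product_topology (\<lambda>_. euclidean) (Aalg B)) (spectrum_Delta B)"

definition iota :: "('a \<Rightarrow> real) set \<Rightarrow> 'a \<Rightarrow> (('a \<Rightarrow> complex) \<Rightarrow> complex)" where
  "iota B x = restrict (\<lambda>a. a x) (Aalg B)"

definition Nk :: "nat \<Rightarrow> ('a \<Rightarrow> real) \<Rightarrow> 'a set" where
  "Nk k f = {x. \<bar>f x\<bar> \<ge> 1 / real k}"

end

theory Submission
  imports Defs
begin

definition bnd :: "('a \<Rightarrow> complex) \<Rightarrow> bool" where
  "bnd u \<longleftrightarrow> (\<exists>M. \<forall>x. cmod (u x) \<le> M)"

lemma sn_le:
  assumes "\<And>x. cmod (u x) \<le> M" shows "supnorm u \<le> M"
  unfolding supnorm_def by (rule cSUP_least) (auto simp: assms)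

lemma sn_ge:
  assumes "bnd u" shows "cmod (u y) \<le> supnorm u"
proof -
  from assms obtain M where "\<forall>x. cmod (u x) \<le> M" by (auto simp: bnd_def)
  then have "bdd_above (range (\<lambda>x. cmod (u x)))" by (auto intro: bdd_aboveI2)
  then show ?thesis unfolding supnorm_def by (meson UNIV_I cSUP_upper)
qed

lemma sn_unb:
  assumes "\<not> bnd u" shows "supnorm u = (LEAST z::real. False)"
proof -
  have "(\<lambda>z. \<forall>x\<in>range (\<lambda>x. cmod (u x)). x \<le> z) = (\<lambda>z. False)"
    using assms by (auto simp: bnd_def fun_eq_iff)
  then show ?thesis unfolding supnorm_def Sup_real_def by simp
qed

lemma bnd_diff: "bnd a \<Longrightarrow> bnd b \<Longrightarrow> bnd (\<lambda>x. a x - b x)"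
  unfolding bnd_def
proof (elim exE)
  fix M N assume "\<forall>x. cmod (a x) \<le> M" "\<forall>x. cmod (b x) \<le> N"
  then have "\<forall>x. cmod (a x - b x) \<le> M + N"
    by (metis add_mono norm_triangle_ineq4 order_trans)
  then show "\<exists>M. \<forall>x. cmod (a x - b x) \<le> M" by blast
qed

lemma bnd_diff_rev: "bnd (\<lambda>x. a x - b x) \<Longrightarrow> bnd b \<Longrightarrow> bnd a"
  using bnd_diff[of "\<lambda>x. a x - b x" "\<lambda>x. - b x"]
  by (simp add: bnd_def)

lemma sn_nonneg: "bnd u \<Longrightarrow> 0 \<le> supnorm u"
  using sn_ge[of u undefined] by (meson norm_ge_zero order_trans)

lemma closedin_conj:
  "closedin X {x\<in>topspace X. P x} \<Longrightarrow> closedin X {x\<in>topspace X. Q x} \<Longrightarrow> closedin X {x\<in>topspace X. P x \<and> Q x}"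
proof -
  assume "closedin X {x\<in>topspace X. P x}" "closedin X {x\<in>topspace X. Q x}"
  then have "closedin X ({x\<in>topspace X. P x} \<inter> {x\<in>topspace X. Q x})" by (rule closedin_Int)
  moreover have "{x\<in>topspace X. P x} \<inter> {x\<in>topspace X. Q x} = {x\<in>topspace X. P x \<and> Q x}" by blast
  ultimately show ?thesis by simp
qed

lemma closedin_all:
  assumes "\<And>i. i \<in> I \<Longrightarrow> closedin X {x\<in>topspace X. P i x}"
  shows "closedin X {x\<in>topspace X. \<forall>i\<in>I. P i x}"
proof (cases "I = {}")
  case True then show ?thesis by simp
next
  case False
  have "closedin X (\<Inter> ((\<lambda>i. {x\<in>topspace X. P i x}) ` I))"
    using False assms by (intro closedin_Inter) auto
  moreover have "\<Inter> ((\<lambda>i. {x\<in>topspace X. P i x}) ` I) = {x\<in>topspace X. \<forall>i\<in>I. P i x}"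
    using False by blast
  ultimately show ?thesis by simp
qed

lemma closedin_allU:
  assumes "\<And>i. closedin X {x\<in>topspace X. P i x}"
  shows "closedin X {x\<in>topspace X. \<forall>i. P i x}"
  using closedin_all[of UNIV X P] assms by simp

lemma closedin_eqc:
  fixes f g :: "'a \<Rightarrow> complex"
  assumes "continuous_map X euclidean f" "continuous_map X euclidean g"
  shows "closedin X {x\<in>topspace X. f x = g x}"
proof -
  have "closedin X {x\<in>topspace X. f x - g x \<in> {0}}"
    by (rule closedin_continuous_map_preimage) (use assms in \<open>auto intro: continuous_map_diff simp flip: closed_closedin\<close>)
  then show ?thesis by simp
qed

lemma closedin_lec:
  fixes f g :: "'a \<Rightarrow> real"
  assumes "continuous_map X euclidean f" "continuous_map X euclidean g"
  shows "closedin X {x\<in>topspace X. f x \<le> g x}"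
proof -
  have "closedin X {x\<in>topspace X. g x - f x \<in> {0..}}"
    by (rule closedin_continuous_map_preimage) (use assms in \<open>auto intro: continuous_map_diff simp flip: closed_closedin\<close>)
  then show ?thesis by simp
qed

lemma cm_cmult:
  fixes f g :: "'a \<Rightarrow> complex"
  shows "continuous_map X euclidean f \<Longrightarrow> continuous_map X euclidean g \<Longrightarrow> continuous_map X euclidean (\<lambda>x. f x * g x)"
  by (simp add: continuous_map_atin tendsto_mult)

context
  fixes B :: "('a \<Rightarrow> real) set"
  assumes adm: "admissible_B B"
begin

lemma B_zero: "(\<lambda>x. 0) \<in> B" using adm by (simp add: admissible_B_def)
lemma B_add: "f \<in> B \<Longrightarrow> g \<in> B \<Longrightarrow> (\<lambda>x. f x + g x) \<in> B" using adm by (simp add: admissible_B_def)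
lemma B_scal: "f \<in> B \<Longrightarrow> (\<lambda>x. c * f x) \<in> B" using adm by (simp add: admissible_B_def)
lemma B_mult: "f \<in> B \<Longrightarrow> g \<in> B \<Longrightarrow> (\<lambda>x. f x * g x) \<in> B" using adm by (simp add: admissible_B_def)
lemma B_bnd: "f \<in> B \<Longrightarrow> \<exists>M. \<forall>x. \<bar>f x\<bar> \<le> M"
  using adm unfolding admissible_B_def bounded_iff by (metis rangeI real_norm_def)

lemma B_lin: "f \<in> B \<Longrightarrow> g \<in> B \<Longrightarrow> (\<lambda>x. r * f x + s * g x) \<in> B"
  by (rule B_add[OF B_scal B_scal])

lemma B_diff: "f \<in> B \<Longrightarrow> g \<in> B \<Longrightarrow> (\<lambda>x. f x - g x) \<in> B"
  using B_lin[of f g 1 "-1"] by simp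

lemma cB_bnd: "f \<in> B \<Longrightarrow> g \<in> B \<Longrightarrow> bnd (\<lambda>x. complex_of_real (f x) + \<i> * complex_of_real (g x))"
proof -
  assume f: "f \<in> B" and g: "g \<in> B"
  obtain M where M: "\<forall>x. \<bar>f x\<bar> \<le> M" using B_bnd[OF f] by blast
  obtain N where N: "\<forall>x. \<bar>g x\<bar> \<le> N" using B_bnd[OF g] by blast
  have "cmod (complex_of_real (f x) + \<i> * complex_of_real (g x)) \<le> M + N" for x
  proof -
    have "cmod (complex_of_real (f x) + \<i> * complex_of_real (g x)) \<le> cmod (complex_of_real (f x)) + cmod (\<i> * complex_of_real (g x))"
      by (rule norm_triangle_ineq)
    also have "\<dots> = \<bar>f x\<bar> + \<bar>g x\<bar>" by (simp add: norm_mult)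
    also have "\<dots> \<le> M + N" using M N by (simp add: add_mono)
    finally show ?thesis .
  qed
  then show ?thesis unfolding bnd_def by blast
qed

lemma A_intro:
  assumes "\<And>e. e > 0 \<Longrightarrow> \<exists>f\<in>B. \<exists>g\<in>B. \<forall>x. cmod (a x - (complex_of_real (f x) + \<i> * complex_of_real (g x))) \<le> e"
  shows "a \<in> Aalg B"
  unfolding Aalg_def
proof (intro CollectI allI impI)
  fix e :: real assume "e > 0"
  have e2: "e/2 < e" using \<open>e>0\<close> by simp
  obtain f g where "f \<in> B" "g \<in> B" "\<forall>x. cmod (a x - (complex_of_real (f x) + \<i> * complex_of_real (g x))) \<le> e/2"
    using assms[of "e/2"] \<open>e>0\<close> by auto
  moreover have "supnorm (\<lambda>x. a x - (complex_of_real (f x) + \<i> * complex_of_real (g x))) \<le> e/2"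
    using calculation(3) by (intro sn_le) auto
  ultimately show "\<exists>f\<in>B. \<exists>g\<in>B. supnorm (\<lambda>x. a x - (complex_of_real (f x) + \<i> * complex_of_real (g x))) < e"
    using e2 by (meson le_less_trans)
qed

lemma A_approx:
  assumes "a \<in> Aalg B" "bnd a" "e > 0"
  shows "\<exists>f\<in>B. \<exists>g\<in>B. \<forall>x. cmod (a x - (complex_of_real (f x) + \<i> * complex_of_real (g x))) < e"
proof -
  obtain f g where fg: "f \<in> B" "g \<in> B" "supnorm (\<lambda>x. a x - (complex_of_real (f x) + \<i> * complex_of_real (g x))) < e"
    using assms unfolding Aalg_def by blast
  have "bnd (\<lambda>x. a x - (complex_of_real (f x) + \<i> * complex_of_real (g x)))"
    by (rule bnd_diff[OF assms(2) cB_bnd[OF fg(1,2)]])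
  then show ?thesis using fg sn_ge by (meson le_less_trans)
qed

lemma A_zero: "(\<lambda>x. 0) \<in> Aalg B"
  by (rule A_intro) (use B_zero in force)

lemma B_in_A: "f \<in> B \<Longrightarrow> (\<lambda>x. complex_of_real (f x)) \<in> Aalg B"
  by (rule A_intro) (use B_zero in force)

lemma D_ext: "\<phi> \<in> spectrum_Delta B \<Longrightarrow> \<phi> \<in> extensional (Aalg B)"
  by (simp add: spectrum_Delta_def)
lemma D_add: "\<phi> \<in> spectrum_Delta B \<Longrightarrow> a \<in> Aalg B \<Longrightarrow> b \<in> Aalg B \<Longrightarrow> \<phi> (\<lambda>x. a x + b x) = \<phi> a + \<phi> b"
  by (simp add: spectrum_Delta_def)
lemma D_scal: "\<phi> \<in> spectrum_Delta B \<Longrightarrow> a \<in> Aalg B \<Longrightarrow> \<phi> (\<lambda>x. c * a x) = c * \<phi> a"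
  by (simp add: spectrum_Delta_def)
lemma D_mult: "\<phi> \<in> spectrum_Delta B \<Longrightarrow> a \<in> Aalg B \<Longrightarrow> b \<in> Aalg B \<Longrightarrow> \<phi> (\<lambda>x. a x * b x) = \<phi> a * \<phi> b"
  by (simp add: spectrum_Delta_def)
lemma D_cont: "\<phi> \<in> spectrum_Delta B \<Longrightarrow> a \<in> Aalg B \<Longrightarrow> e > 0 \<Longrightarrow>
   \<exists>d>0. \<forall>b\<in>Aalg B. supnorm (\<lambda>x. b x - a x) < d \<longrightarrow> cmod (\<phi> b - \<phi> a) < e"
  by (simp add: spectrum_Delta_def)
lemma D_nz: "\<phi> \<in> spectrum_Delta B \<Longrightarrow> \<exists>a\<in>Aalg B. \<phi> a \<noteq> 0"
  by (simp add: spectrum_Delta_def)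

lemma D_zero: "\<phi> \<in> spectrum_Delta B \<Longrightarrow> \<phi> (\<lambda>x. 0) = 0"
  using D_scal[OF _ A_zero, of \<phi> 0] by simp

lemma D_close:
  assumes "\<phi> \<in> spectrum_Delta B" "a \<in> Aalg B" "b \<in> Aalg B" "supnorm (\<lambda>x. b x - a x) \<le> 0"
  shows "\<phi> b = \<phi> a"
proof (rule ccontr)
  assume "\<phi> b \<noteq> \<phi> a"
  then have "cmod (\<phi> b - \<phi> a) > 0" by simp
  have "\<exists>d>0. \<forall>c\<in>Aalg B. supnorm (\<lambda>x. c x - a x) < d \<longrightarrow> cmod (\<phi> c - \<phi> a) < cmod (\<phi> b - \<phi> a)"
    by (rule D_cont[OF assms(1,2) \<open>cmod (\<phi> b - \<phi> a) > 0\<close>])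
  then obtain d where "d > 0" and d: "\<forall>c\<in>Aalg B. supnorm (\<lambda>x. c x - a x) < d \<longrightarrow> cmod (\<phi> c - \<phi> a) < cmod (\<phi> b - \<phi> a)"
    by blast
  have "supnorm (\<lambda>x. b x - a x) < d" using assms(4) \<open>d>0\<close> by linarith
  then have "cmod (\<phi> b - \<phi> a) < cmod (\<phi> b - \<phi> a)" using d assms(3) by blast
  then show False by simp
qed

lemma A_bnd:
  assumes D: "\<phi> \<in> spectrum_Delta B" and a: "a \<in> Aalg B"
  shows "bnd a"
proof (rule ccontr)
  assume na: "\<not> bnd a"
  define c0 where "c0 = (LEAST z::real. False)"
  have "c0 < e" if "e > 0" for e
  proof -
    obtain f g where fg: "f \<in> B" "g \<in> B" "supnorm (\<lambda>x. a x - (complex_of_real (f x) + \<i> * complex_of_real (g x))) < e"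
      using a \<open>e>0\<close> unfolding Aalg_def by blast
    have "\<not> bnd (\<lambda>x. a x - (complex_of_real (f x) + \<i> * complex_of_real (g x)))"
      using bnd_diff_rev[of a "\<lambda>x. complex_of_real (f x) + \<i> * complex_of_real (g x)"] cB_bnd[OF fg(1,2)] na by blast
    then show ?thesis using fg(3) sn_unb c0_def by metis
  qed
  then have c0: "c0 \<le> 0" by (metis less_irrefl not_le)
  have Z: "\<phi> u = 0" if u: "u \<in> Aalg B" "\<not> bnd u" for u
  proof -
    have "\<not> bnd (\<lambda>x. u x - 0)" using u by simp
    then have "supnorm (\<lambda>x. u x - 0) \<le> 0" using sn_unb c0 c0_def by metis
    then have "\<phi> u = \<phi> (\<lambda>x. 0)" using D_close[OF D A_zero u(1)] by simp
    then show ?thesis using D_zero[OF D] by simp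
  qed
  have "\<phi> b = 0" if b: "b \<in> Aalg B" for b
  proof (cases "bnd b")
    case True
    then have "\<not> bnd (\<lambda>x. a x - b x)" using bnd_diff_rev na by blast
    then have "supnorm (\<lambda>x. a x - b x) \<le> 0" using sn_unb c0 c0_def by metis
    then have "\<phi> a = \<phi> b" using D_close[OF D b a] by simp
    then show ?thesis using Z[OF a na] by simp
  next
    case False then show ?thesis using Z b by blast
  qed
  then show False using D_nz[OF D] by blast
qed

lemma A_add:
  assumes bw: "\<And>a. a \<in> Aalg B \<Longrightarrow> bnd a" and a: "a \<in> Aalg B" and b: "b \<in> Aalg B"
  shows "(\<lambda>x. a x + b x) \<in> Aalg B"
proof (rule A_intro)
  fix e :: real assume "e > 0"
  obtain f g where fg: "f \<in> B" "g \<in> B" "\<forall>x. cmod (a x - (complex_of_real (f x) + \<i> * complex_of_real (g x))) < e/2"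
    using A_approx[OF a bw[OF a], of "e/2"] \<open>e>0\<close> by auto
  obtain f' g' where fg': "f' \<in> B" "g' \<in> B" "\<forall>x. cmod (b x - (complex_of_real (f' x) + \<i> * complex_of_real (g' x))) < e/2"
    using A_approx[OF b bw[OF b], of "e/2"] \<open>e>0\<close> by auto
  define F where "F = (\<lambda>x. f x + f' x)"
  define G where "G = (\<lambda>x. g x + g' x)"
  have FG: "F \<in> B" "G \<in> B" unfolding F_def G_def using B_add fg fg' by auto
  have "cmod (a x + b x - (complex_of_real (F x) + \<i> * complex_of_real (G x))) \<le> e" for x
  proof -
    have eq: "a x + b x - (complex_of_real (F x) + \<i> * complex_of_real (G x))
      = (a x - (complex_of_real (f x) + \<i> * complex_of_real (g x))) + (b x - (complex_of_real (f' x) + \<i> * complex_of_real (g' x)))"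
      by (simp add: algebra_simps F_def G_def)
    show ?thesis unfolding eq using fg(3) fg'(3)
      by (smt (verit, best) norm_triangle_ineq field_sum_of_halves)
  qed
  then show "\<exists>f\<in>B. \<exists>g\<in>B. \<forall>x. cmod (a x + b x - (complex_of_real (f x) + \<i> * complex_of_real (g x))) \<le> e"
    using FG by blast
qed

lemma A_scal:
  assumes bw: "\<And>a. a \<in> Aalg B \<Longrightarrow> bnd a" and a: "a \<in> Aalg B"
  shows "(\<lambda>x. c * a x) \<in> Aalg B"
proof (rule A_intro)
  fix e :: real assume "e > 0"
  define d where "d = e / (cmod c + 1)"
  have c1: "cmod c + 1 > 0" by (simp add: add_nonneg_pos)
  have d: "d > 0" using \<open>e>0\<close> c1 by (simp add: d_def)
  have cd: "cmod c * d \<le> e"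
  proof -
    have "cmod c * d \<le> (cmod c + 1) * d" using d by (simp add: mult_right_mono)
    also have "\<dots> = e" unfolding d_def using c1 by simp
    finally show ?thesis .
  qed
  obtain f g where fg: "f \<in> B" "g \<in> B" "\<forall>x. cmod (a x - (complex_of_real (f x) + \<i> * complex_of_real (g x))) < d"
    using A_approx[OF a bw[OF a] d] by auto
  define F where "F = (\<lambda>x. Re c * f x + (- Im c) * g x)"
  define G where "G = (\<lambda>x. Im c * f x + Re c * g x)"
  have FG: "F \<in> B" "G \<in> B" unfolding F_def G_def using B_lin[OF fg(1,2)] by blast+
  have "cmod (c * a x - (complex_of_real (F x) + \<i> * complex_of_real (G x))) \<le> e" for x
  proof -
    have eq: "c * a x - (complex_of_real (F x) + \<i> * complex_of_real (G x))
      = c * (a x - (complex_of_real (f x) + \<i> * complex_of_real (g x)))"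
      unfolding F_def G_def by (simp add: complex_eq_iff algebra_simps)
    have "cmod (c * (a x - (complex_of_real (f x) + \<i> * complex_of_real (g x)))) \<le> cmod c * d"
      unfolding norm_mult using fg(3) by (simp add: mult_left_mono less_imp_le)
    then show ?thesis unfolding eq using cd by linarith
  qed
  then show "\<exists>f\<in>B. \<exists>g\<in>B. \<forall>x. cmod (c * a x - (complex_of_real (f x) + \<i> * complex_of_real (g x))) \<le> e"
    using FG by blast
qed

lemma A_mult:
  assumes bw: "\<And>a. a \<in> Aalg B \<Longrightarrow> bnd a" and a: "a \<in> Aalg B" and b: "b \<in> Aalg B"
  shows "(\<lambda>x. a x * b x) \<in> Aalg B"
proof (rule A_intro)
  fix e :: real assume "e > 0"
  obtain Ma where Ma: "\<forall>x. cmod (a x) \<le> Ma" using bw[OF a] by (auto simp: bnd_def)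
  obtain Mb where Mb: "\<forall>x. cmod (b x) \<le> Mb" using bw[OF b] by (auto simp: bnd_def)
  have Ma0: "Ma \<ge> 0" using Ma norm_ge_zero order_trans by blast
  have Mb0: "Mb \<ge> 0" using Mb norm_ge_zero order_trans by blast
  define d where "d = min 1 (e / (Ma + Mb + 1))"
  have d: "d > 0" using \<open>e>0\<close> Ma0 Mb0 by (simp add: d_def)
  have d1: "d \<le> 1" by (simp add: d_def)
  have de: "(Ma + Mb + 1) * d \<le> e"
  proof -
    have "d \<le> e / (Ma + Mb + 1)" by (simp add: d_def)
    then show ?thesis using Ma0 Mb0 by (simp add: field_simps)
  qed
  obtain f g where fg: "f \<in> B" "g \<in> B" "\<forall>x. cmod (a x - (complex_of_real (f x) + \<i> * complex_of_real (g x))) < d"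
    using A_approx[OF a bw[OF a] d] by auto
  obtain f' g' where fg': "f' \<in> B" "g' \<in> B" "\<forall>x. cmod (b x - (complex_of_real (f' x) + \<i> * complex_of_real (g' x))) < d"
    using A_approx[OF b bw[OF b] d] by auto
  define F where "F = (\<lambda>x. f x * f' x - g x * g' x)"
  define G where "G = (\<lambda>x. f x * g' x + g x * f' x)"
  have FG: "F \<in> B" "G \<in> B" unfolding F_def G_def using B_diff B_add B_mult fg fg' by auto
  have "cmod (a x * b x - (complex_of_real (F x) + \<i> * complex_of_real (G x))) \<le> e" for x
  proof -
    define p where "p = complex_of_real (f x) + \<i> * complex_of_real (g x)"
    define q where "q = complex_of_real (f' x) + \<i> * complex_of_real (g' x)"
    have pq: "complex_of_real (F x) + \<i> * complex_of_real (G x) = p * q"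
      unfolding F_def G_def p_def q_def by (simp add: complex_eq_iff algebra_simps)
    have ap: "cmod (a x - p) \<le> d" using fg(3) p_def less_imp_le by blast
    have bq: "cmod (b x - q) \<le> d" using fg'(3) q_def less_imp_le by blast
    have q: "cmod q \<le> Mb + 1"
    proof -
      have "cmod q \<le> cmod (b x) + cmod (b x - q)" by (metis norm_triangle_sub norm_minus_commute)
      then show ?thesis using Mb bq d1 by (smt (verit))
    qed
    have eq: "a x * b x - p * q = a x * (b x - q) + q * (a x - p)" by (simp add: algebra_simps)
    have "cmod (a x * b x - p * q) \<le> cmod (a x) * cmod (b x - q) + cmod q * cmod (a x - p)"
      unfolding eq by (metis norm_mult norm_triangle_ineq)
    also have "\<dots> \<le> Ma * d + (Mb + 1) * d"
      by (intro add_mono mult_mono) (use Ma ap bq q Ma0 Mb0 in auto)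
    also have "\<dots> = (Ma + Mb + 1) * d" by (simp add: algebra_simps)
    finally show ?thesis unfolding pq using de by linarith
  qed
  then show "\<exists>f\<in>B. \<exists>g\<in>B. \<forall>x. cmod (a x * b x - (complex_of_real (f x) + \<i> * complex_of_real (g x))) \<le> e"
    using FG by blast
qed

lemma D_norm:
  assumes D: "\<phi> \<in> spectrum_Delta B" and a: "a \<in> Aalg B"
  shows "cmod (\<phi> a) \<le> supnorm a"
proof (rule ccontr)
  have bw: "\<And>a. a \<in> Aalg B \<Longrightarrow> bnd a" using A_bnd[OF D] .
  define s where "s = supnorm a"
  have s0: "s \<ge> 0" unfolding s_def using sn_nonneg bw a by blast
  assume "\<not> cmod (\<phi> a) \<le> supnorm a"
  then have sl: "s < cmod (\<phi> a)" unfolding s_def by simp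
  define l where "l = \<phi> a"
  have l0: "cmod l > 0" using sl s0 unfolding l_def by linarith
  define b where "b = (\<lambda>x. (1/l) * a x)"
  have bA: "b \<in> Aalg B" unfolding b_def by (rule A_scal[OF bw a])
  have phib: "\<phi> b = 1" unfolding b_def using D_scal[OF D a, of "1/l"] l0 l_def by simp
  define r where "r = s / cmod l"
  have r1: "r < 1" unfolding r_def using sl l0 l_def by simp
  have r0: "r \<ge> 0" unfolding r_def using s0 l0 by simp
  have br: "cmod (b x) \<le> r" for x
  proof -
    have "cmod (a x) \<le> s" unfolding s_def by (rule sn_ge[OF bw[OF a]])
    then show ?thesis unfolding b_def r_def using l0 by (simp add: norm_mult norm_divide divide_right_mono)
  qed
  have pw: "(\<lambda>x. b x ^ Suc n) \<in> Aalg B \<and> \<phi> (\<lambda>x. b x ^ Suc n) = 1" for n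
  proof (induction n)
    case 0
    then show ?case using bA phib by simp
  next
    case (Suc n)
    have eq: "(\<lambda>x. b x ^ Suc (Suc n)) = (\<lambda>x. b x * (\<lambda>x. b x ^ Suc n) x)" by simp
    show ?case unfolding eq using Suc A_mult[OF bw bA, of "\<lambda>x. b x ^ Suc n"] D_mult[OF D bA, of "\<lambda>x. b x ^ Suc n"] phib
      by simp
  qed
  have "\<exists>d>0. \<forall>c\<in>Aalg B. supnorm (\<lambda>x. c x - 0) < d \<longrightarrow> cmod (\<phi> c - \<phi> (\<lambda>x. 0)) < 1"
    using D_cont[OF D A_zero, of 1] by simp
  then obtain d where d: "d > 0" and dc: "\<forall>c\<in>Aalg B. supnorm (\<lambda>x. c x - 0) < d \<longrightarrow> cmod (\<phi> c - \<phi> (\<lambda>x. 0)) < 1"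
    by blast
  obtain n where n: "r ^ n < d" using real_arch_pow_inv[OF d r1] by blast
  have "r ^ Suc n \<le> r ^ n" using r0 r1 by (simp add: mult_left_le_one_le)
  have "supnorm (\<lambda>x. b x ^ Suc n - 0) \<le> r ^ Suc n"
  proof (rule sn_le)
    fix x show "cmod (b x ^ Suc n - 0) \<le> r ^ Suc n"
      unfolding diff_zero norm_power by (rule power_mono[OF br norm_ge_zero])
  qed
  then have "supnorm (\<lambda>x. b x ^ Suc n - 0) < d" using n \<open>r ^ Suc n \<le> r ^ n\<close> by linarith
  moreover have "supnorm (\<lambda>x. b x ^ Suc n - 0) < d \<longrightarrow> cmod (\<phi> (\<lambda>x. b x ^ Suc n) - \<phi> (\<lambda>x. 0)) < 1"
    using bspec[OF dc, of "\<lambda>x. b x ^ Suc n"] pw[of n] by simp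
  ultimately have "cmod (\<phi> (\<lambda>x. b x ^ Suc n) - \<phi> (\<lambda>x. 0)) < 1" by blast
  then show False using pw[of n] D_zero[OF D] by simp
qed

lemma D_lip:
  assumes D: "\<phi> \<in> spectrum_Delta B" and a: "a \<in> Aalg B" and b: "b \<in> Aalg B"
  shows "cmod (\<phi> b - \<phi> a) \<le> supnorm (\<lambda>x. b x - a x)"
proof -
  have bw: "\<And>a. a \<in> Aalg B \<Longrightarrow> bnd a" using A_bnd[OF D] .
  define m where "m = (\<lambda>x. (-1) * a x)"
  have mA: "m \<in> Aalg B" unfolding m_def by (rule A_scal[OF bw a])
  have pm: "\<phi> m = - \<phi> a" unfolding m_def using D_scal[OF D a, of "-1"] by simp
  have eq: "(\<lambda>x. b x - a x) = (\<lambda>x. b x + m x)" unfolding m_def by simp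
  have sA: "(\<lambda>x. b x - a x) \<in> Aalg B" unfolding eq by (rule A_add[OF bw b mA])
  have "\<phi> (\<lambda>x. b x - a x) = \<phi> b - \<phi> a" unfolding eq using D_add[OF D b mA] pm by simp
  then show ?thesis using D_norm[OF D sA] by simp
qed

end

theorem mainTheorem6:
  fixes B :: "('a \<Rightarrow> real) set" and f :: "'a \<Rightarrow> real" and k :: nat
  assumes "admissible_B B"
    and "\<forall>x. \<exists>g\<in>B. g x \<noteq> 0"
    and "f \<in> B" and "k \<ge> 1"
  shows "compactin (gelfand_top B) ((gelfand_top B) closure_of (iota B ` Nk k f))"
proof -
  note adm = assms(1)
  define A where "A = Aalg B"
  define D where "D = spectrum_Delta B"
  define P where "P = product_topology (\<lambda>_::('a\<Rightarrow>complex). (euclidean::complex topology)) A"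
  have T: "gelfand_top B = subtopology P D" unfolding gelfand_top_def P_def A_def D_def ..
  define F where "F = (\<lambda>x. complex_of_real (f x))"
  have FA: "F \<in> A" unfolding F_def A_def by (rule B_in_A[OF adm assms(3)])
  have k0: "1 / real k > 0" using assms(4) by simp
  have proj: "continuous_map P euclidean (\<lambda>\<phi>. \<phi> a)" if "a \<in> A" for a
    unfolding P_def using continuous_map_product_projection[OF that, of "\<lambda>_. euclidean"] by simp
  have AZ: "(\<lambda>x. 0) \<in> A" unfolding A_def by (rule A_zero[OF adm])
  define K where "K = {\<phi>\<in>topspace P. (\<forall>a\<in>A. \<forall>b\<in>A. \<forall>c.
      \<phi> (\<lambda>x. a x + b x) = \<phi> a + \<phi> b \<and> \<phi> (\<lambda>x. c * a x) = c * \<phi> a \<and>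
      \<phi> (\<lambda>x. a x * b x) = \<phi> a * \<phi> b \<and> cmod (\<phi> b - \<phi> a) \<le> supnorm (\<lambda>x. b x - a x))
      \<and> 1 / real k \<le> cmod (\<phi> F)}"
  show ?thesis
  proof (cases "D = {}")
    case True
    then have "topspace (gelfand_top B) = {}" unfolding T by simp
    then show ?thesis using closure_of_subset_topspace by (metis compactin_empty subset_empty)
  next
    case Dne: False
    then obtain \<phi>0 where "\<phi>0 \<in> D" by blast
    have bw: "\<And>a. a \<in> A \<Longrightarrow> bnd a" using A_bnd[OF adm] \<open>\<phi>0 \<in> D\<close> unfolding A_def D_def by blast
    have Aadd: "(\<lambda>x. a x + b x) \<in> A" if "a \<in> A" "b \<in> A" for a b
      using A_add[OF adm] bw that unfolding A_def by blast
    have Ascal: "(\<lambda>x. c * a x) \<in> A" if "a \<in> A" for a c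
      using A_scal[OF adm] bw that unfolding A_def by blast
    have Amult: "(\<lambda>x. a x * b x) \<in> A" if "a \<in> A" "b \<in> A" for a b
      using A_mult[OF adm] bw that unfolding A_def by blast
    have Kclosed: "closedin P K"
      unfolding K_def
    proof (intro closedin_conj closedin_all closedin_allU)
      fix a b c assume a: "a \<in> A" and b: "b \<in> A"
      show "closedin P {\<phi> \<in> topspace P. \<phi> (\<lambda>x. a x + b x) = \<phi> a + \<phi> b}"
        by (intro closedin_eqc continuous_map_add proj a b Aadd)
      show "closedin P {\<phi> \<in> topspace P. \<phi> (\<lambda>x. c * a x) = c * \<phi> a}"
        by (intro closedin_eqc cm_cmult proj a Ascal continuous_map_canonical_const)
      show "closedin P {\<phi> \<in> topspace P. \<phi> (\<lambda>x. a x * b x) = \<phi> a * \<phi> b}"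
        by (intro closedin_eqc cm_cmult proj a b Amult)
      show "closedin P {\<phi> \<in> topspace P. cmod (\<phi> b - \<phi> a) \<le> supnorm (\<lambda>x. b x - a x)}"
        by (intro closedin_lec continuous_map_norm continuous_map_diff proj a b continuous_map_canonical_const)
    next
      show "closedin P {\<phi> \<in> topspace P. 1 / real k \<le> cmod (\<phi> F)}"
        by (intro closedin_lec continuous_map_norm proj FA continuous_map_canonical_const)
    qed
    have Kzero: "\<phi> (\<lambda>x. 0) = 0" if "\<phi> \<in> K" for \<phi>
    proof -
      have H: "\<forall>a\<in>A. \<forall>b\<in>A. \<forall>c.
      \<phi> (\<lambda>x. a x + b x) = \<phi> a + \<phi> b \<and> \<phi> (\<lambda>x. c * a x) = c * \<phi> a \<and>
      \<phi> (\<lambda>x. a x * b x) = \<phi> a * \<phi> b \<and> cmod (\<phi> b - \<phi> a) \<le> supnorm (\<lambda>x. b x - a x)"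
        using that unfolding K_def by blast
      show ?thesis using spec[OF bspec[OF bspec[OF H AZ] AZ], of 0] by simp
    qed
    have KL: "K \<subseteq> PiE A (\<lambda>a. cball 0 (supnorm a))"
    proof
      fix \<phi> assume \<phi>: "\<phi> \<in> K"
      have ext: "\<phi> \<in> extensional A" using \<phi> unfolding K_def P_def by (simp add: PiE_def)
      have "cmod (\<phi> a) \<le> supnorm a" if a: "a \<in> A" for a
      proof -
        have "cmod (\<phi> a - \<phi> (\<lambda>x. 0)) \<le> supnorm (\<lambda>x. a x - 0)" using \<phi> a AZ unfolding K_def by blast
        then show ?thesis using Kzero[OF \<phi>] by simp
      qed
      then show "\<phi> \<in> PiE A (\<lambda>a. cball 0 (supnorm a))" using ext by (simp add: PiE_def Pi_def)
    qed
    have Lcomp: "compactin P (PiE A (\<lambda>a. cball 0 (supnorm a)))"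
      unfolding P_def compactin_PiE by simp
    have KP: "compactin P K" by (rule closed_compactin[OF Lcomp KL Kclosed])
    have KD: "K \<subseteq> D"
    proof
      fix \<phi> assume \<phi>: "\<phi> \<in> K"
      have ext: "\<phi> \<in> extensional A" using \<phi> unfolding K_def P_def by (simp add: PiE_def)
      have C: "\<And>a b c. a \<in> A \<Longrightarrow> b \<in> A \<Longrightarrow> \<phi> (\<lambda>x. a x + b x) = \<phi> a + \<phi> b \<and> \<phi> (\<lambda>x. c * a x) = c * \<phi> a \<and>
          \<phi> (\<lambda>x. a x * b x) = \<phi> a * \<phi> b \<and> cmod (\<phi> b - \<phi> a) \<le> supnorm (\<lambda>x. b x - a x)"
        using \<phi> unfolding K_def by blast
      have nz: "\<phi> F \<noteq> 0" using \<phi> k0 unfolding K_def by auto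
      have cont: "\<exists>d>0. \<forall>b\<in>A. supnorm (\<lambda>x. b x - a x) < d \<longrightarrow> cmod (\<phi> b - \<phi> a) < e"
        if "a \<in> A" "e > 0" for a e
        using that C by (meson le_less_trans)
      show "\<phi> \<in> D" unfolding D_def spectrum_Delta_def
        using ext C cont nz FA AZ unfolding A_def by blast
    qed
    have KT: "closedin (gelfand_top B) K"
      unfolding T closedin_subtopology using Kclosed KD by blast
    have Ksub: "topspace (gelfand_top B) \<inter> iota B ` Nk k f \<subseteq> K"
    proof
      fix \<phi> assume "\<phi> \<in> topspace (gelfand_top B) \<inter> iota B ` Nk k f"
      then obtain x where \<phi>D: "\<phi> \<in> D" and \<phi>x: "\<phi> = iota B x" and x: "x \<in> Nk k f"
        unfolding T by auto
      have tp: "\<phi> \<in> topspace P" using D_ext[OF adm] \<phi>D unfolding P_def D_def A_def by (simp add: PiE_def Pi_def)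
      have "\<phi> F = F x" unfolding \<phi>x iota_def using FA A_def by simp
      then have C5: "1 / real k \<le> cmod (\<phi> F)" using x unfolding Nk_def F_def by simp
      have C: "\<phi> (\<lambda>x. a x + b x) = \<phi> a + \<phi> b \<and> \<phi> (\<lambda>x. c * a x) = c * \<phi> a \<and>
          \<phi> (\<lambda>x. a x * b x) = \<phi> a * \<phi> b \<and> cmod (\<phi> b - \<phi> a) \<le> supnorm (\<lambda>x. b x - a x)"
        if "a \<in> A" "b \<in> A" for a b c
        using that \<phi>D D_add[OF adm] D_scal[OF adm] D_mult[OF adm] D_lip[OF adm] unfolding A_def D_def by blast
      show "\<phi> \<in> K" unfolding K_def using tp C C5 by blast
    qed
    have cl: "gelfand_top B closure_of (iota B ` Nk k f) \<subseteq> K"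
      by (subst closure_of_restrict) (rule closure_of_minimal[OF Ksub KT])
    have KcT: "compactin (gelfand_top B) K" unfolding T compactin_subtopology using KP KD by blast
    show ?thesis by (rule closed_compactin[OF KcT cl closedin_closure_of])
  qed
qed

end
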